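(* Consider the fully discrete implicit variable-step BDF2 scheme described in the context and let $\{u^n\}_{n=0}^N$ be its solution. Suppose the time-step ratios satisfy $r_k\le r_s$ for $2\le k\le N$ and the time steps satisfy \[ \tau_n<4\delta\min\Big\{R_L(r_n,r_{n+1}),\ \frac{2+r_2}{1+r_2}\Big\},\qquad 1\le n\le N, \] where $R_L(z,s)=\frac{2+4z-z^{3/2}}{1+z}-\frac{s^{3/2}}{1+s}$ (with $r_1:=0$). Then \[ E^n\le\mathcal{E}^n\le\mathcal{E}^{n-1}\le E^0,\qquad 1\le n\le N, \] where $E^n=\frac{\delta}{2}\|\Delta_hu^n\|^2+\frac14\big\||\nabla_hu^n|^2-1\big\|^2$ for $n\ge0$, $\mathcal{E}^n=E^n+\frac{r_{n+1}^{3/2}}{2(1+r_{n+1})\tau_n}\|\nabla_\tau u^n\|^2$ for $n\ge1$, and $\mathcal E^0=E^0$.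
   Context: Let $L>0$, $\Omega=(0,L)^2$, $M$ a positive integer, $h=L/M$, $x_i=ih$, $y_j=jh$, $\Omega_h=\{(x_i,y_j):1\le i,j\le M\}$, $\bar\Omega_h=\{(x_i,y_j):0\le i,j\le M\}$, and $\mathbb{V}_h$ the space of grid functions on $\bar\Omega_h$ that are $L$-periodic in each direction. For $v\in\mathbb{V}_h$: $\delta_x v_{i+1/2,j}=(v_{i+1,j}-v_{ij})/h$, $\Delta_x v_{ij}=(v_{i+1,j}-v_{i-1,j})/(2h)$, $\delta_x^2 v_{ij}=(\delta_xv_{i+1/2,j}-\delta_xv_{i-1/2,j})/h$, and analogously in $y$; $\Delta_h=\delta_x^2+\delta_y^2$, $\nabla_h v_{ij}=(\Delta_x v_{ij},\Delta_y v_{ij})^T$, and for a vector grid function $\mathbf{g}=(g_1,g_2)$, $\nabla_h\cdot \mathbf g=\Delta_x g_1+\Delta_y g_2$. Inner product $\langle v,w\rangle=h^2\sum_{\mathrm{x}_h\in\Omega_h}v_hw_h$, $\|v\|=\sqrt{\langle v,v\rangle}$; $|\nabla_hu|$ is the pointwise Euclidean norm. Let $f(\mathbf{v})=(|\mathbf v|^2-1)\mathbf v$ and $\delta>0$. Time levels $0=t_0<t_1<\dots<t_N=T$, $\tau_n=t_n-t_{n-1}$, $r_n=\tau_n/\tau_{n-1}$ ($2\le n\le N$); $r_{N+1}\in(0,r_s]$ is an auxiliary ratio used for $n=N$. $\nabla_\tau v^n=v^n-v^{n-1}$. BDF2 kernels: $b_0^{(1)}=2/\tau_1$, and for $n\ge2$,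 $b_0^{(n)}=\frac{1+2r_n}{\tau_n(1+r_n)}$, $b_1^{(n)}=-\frac{r_n^2}{\tau_n(1+r_n)}$, $b_j^{(n)}=0$ for $j\ge2$; $D_2v^n=\sum_{k=1}^n b_{n-k}^{(n)}\nabla_\tau v^k$. The scheme is: $D_2u_h^n+\delta\Delta_h^2u_h^n-\nabla_h\cdot f(\nabla_hu_h^n)=0$ for $\mathrm{x}_h\in\Omega_h$, $1\le n\le N$, with $u_h^0=\varphi_0(\mathrm{x}_h)-\frac{\tau_1}{2}\varphi_1(\mathrm{x}_h)$, $\varphi_1=\nabla\cdot f(\nabla\varphi_0)-\delta\Delta^2\varphi_0$ for given periodic smooth data $\varphi_0\in H^4(\Omega)$. $r_s$ is a fixed constant with $0<r_s<4.864$. *)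

theory Defs
  imports "HOL-Analysis.Analysis"
begin

text \<open>Grid functions are represented as maps \<open>int \<Rightarrow> int \<Rightarrow> real\<close>;
  the value at index (i,j) is the value at the grid point (i h, j h).\<close>

type_synonym grid = "int \<Rightarrow> int \<Rightarrow> real"

definition periodic_grid :: "nat \<Rightarrow> grid \<Rightarrow> bool" where
  "periodic_grid M v \<longleftrightarrow> (\<forall>i j. v (i + int M) j = v i j \<and> v i (j + int M) = v i j)"

definition mesh :: "real \<Rightarrow> nat \<Rightarrow> real" where
  "mesh L M = L / real M"

(* forward difference: delta_x v_{i+1/2,j} is stored at index i *)
definition dfx :: "real \<Rightarrow> grid \<Rightarrow> grid" where
  "dfx h v i j = (v (i + 1) j - v i j) / h"
definition dfy :: "real \<Rightarrow> grid \<Rightarrow> grid" where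
  "dfy h v i j = (v i (j + 1) - v i j) / h"

definition Dcx :: "real \<Rightarrow> grid \<Rightarrow> grid" where
  "Dcx h v i j = (v (i + 1) j - v (i - 1) j) / (2 * h)"
definition Dcy :: "real \<Rightarrow> grid \<Rightarrow> grid" where
  "Dcy h v i j = (v i (j + 1) - v i (j - 1)) / (2 * h)"

definition d2x :: "real \<Rightarrow> grid \<Rightarrow> grid" where
  "d2x h v i j = (dfx h v i j - dfx h v (i - 1) j) / h"
definition d2y :: "real \<Rightarrow> grid \<Rightarrow> grid" where
  "d2y h v i j = (dfy h v i j - dfy h v i (j - 1)) / h"

definition lap_h :: "real \<Rightarrow> grid \<Rightarrow> grid" where
  "lap_h h v i j = d2x h v i j + d2y h v i j"

definition div_f_grad_h :: "real \<Rightarrow> grid \<Rightarrow> grid" where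
  "div_f_grad_h h v =
     (let g1 = (\<lambda>i j. ((Dcx h v i j)\<^sup>2 + (Dcy h v i j)\<^sup>2 - 1) * Dcx h v i j);
          g2 = (\<lambda>i j. ((Dcx h v i j)\<^sup>2 + (Dcy h v i j)\<^sup>2 - 1) * Dcy h v i j)
      in (\<lambda>i j. Dcx h g1 i j + Dcy h g2 i j))"

definition ip_h :: "real \<Rightarrow> nat \<Rightarrow> grid \<Rightarrow> grid \<Rightarrow> real" where
  "ip_h h M v w = h\<^sup>2 * (\<Sum>i\<in>{1..int M}. \<Sum>j\<in>{1..int M}. v i j * w i j)"
definition norm_h :: "real \<Rightarrow> nat \<Rightarrow> grid \<Rightarrow> real" where
  "norm_h h M v = sqrt (ip_h h M v v)"

definition energy_h :: "real \<Rightarrow> real \<Rightarrow> nat \<Rightarrow> grid \<Rightarrow> real" where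
  "energy_h \<delta> h M v =
     \<delta> / 2 * (norm_h h M (lap_h h v))\<^sup>2
     + 1 / 4 * (norm_h h M (\<lambda>i j. (Dcx h v i j)\<^sup>2 + (Dcy h v i j)\<^sup>2 - 1))\<^sup>2"

definition tstep :: "(nat \<Rightarrow> real) \<Rightarrow> nat \<Rightarrow> real" where
  "tstep t n = t n - t (n - 1)"

definition ratio :: "(nat \<Rightarrow> real) \<Rightarrow> nat \<Rightarrow> real \<Rightarrow> nat \<Rightarrow> real" where
  "ratio t N rN1 n =
     (if n \<le> 1 then 0
      else if n = N + 1 then rN1
      else tstep t n / tstep t (n - 1))"

definition bdf2_kernel :: "(nat \<Rightarrow> real) \<Rightarrow> nat \<Rightarrow> real \<Rightarrow> nat \<Rightarrow> nat \<Rightarrow> real" where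
  "bdf2_kernel t N rN1 n j =
     (if n = 1 then (if j = 0 then 2 / tstep t 1 else 0)
      else (let r = ratio t N rN1 n; \<tau> = tstep t n in
            if j = 0 then (1 + 2 * r) / (\<tau> * (1 + r))
            else if j = 1 then - (r\<^sup>2) / (\<tau> * (1 + r))
            else 0))"

definition D2 :: "(nat \<Rightarrow> real) \<Rightarrow> nat \<Rightarrow> real \<Rightarrow> (nat \<Rightarrow> grid) \<Rightarrow> nat \<Rightarrow> grid" where
  "D2 t N rN1 u n i j =
     (\<Sum>k\<in>{1..n}. bdf2_kernel t N rN1 n (n - k) * (u k i j - u (k - 1) i j))"

definition R_L :: "real \<Rightarrow> real \<Rightarrow> real" where
  "R_L z s = (2 + 4 * z - z powr (3/2)) / (1 + z) - s powr (3/2) / (1 + s)"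

definition mod_energy :: "real \<Rightarrow> real \<Rightarrow> nat \<Rightarrow> (nat \<Rightarrow> real) \<Rightarrow> nat \<Rightarrow> real
                           \<Rightarrow> (nat \<Rightarrow> grid) \<Rightarrow> nat \<Rightarrow> real" where
  "mod_energy \<delta> h M t N rN1 u n =
     (if n = 0 then energy_h \<delta> h M (u 0)
      else energy_h \<delta> h M (u n)
        + (ratio t N rN1 (n + 1)) powr (3/2)
            / (2 * (1 + ratio t N rN1 (n + 1)) * tstep t n)
          * (norm_h h M (\<lambda>i j. u n i j - u (n - 1) i j))\<^sup>2)"

definition pdx :: "(real \<Rightarrow> real \<Rightarrow> real) \<Rightarrow> real \<Rightarrow> real \<Rightarrow> real" where
  "pdx \<phi> x y = deriv (\<lambda>s. \<phi> s y) x"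
definition pdy :: "(real \<Rightarrow> real \<Rightarrow> real) \<Rightarrow> real \<Rightarrow> real \<Rightarrow> real" where
  "pdy \<phi> x y = deriv (\<lambda>s. \<phi> x s) y"

definition lap_c :: "(real \<Rightarrow> real \<Rightarrow> real) \<Rightarrow> real \<Rightarrow> real \<Rightarrow> real" where
  "lap_c \<phi> = (\<lambda>x y. pdx (pdx \<phi>) x y + pdy (pdy \<phi>) x y)"

definition phi1 :: "real \<Rightarrow> (real \<Rightarrow> real \<Rightarrow> real) \<Rightarrow> real \<Rightarrow> real \<Rightarrow> real" where
  "phi1 \<delta> \<phi> =
     (let g1 = (\<lambda>x y. ((pdx \<phi> x y)\<^sup>2 + (pdy \<phi> x y)\<^sup>2 - 1) * pdx \<phi> x y);
          g2 = (\<lambda>x y. ((pdx \<phi> x y)\<^sup>2 + (pdy \<phi> x y)\<^sup>2 - 1) * pdy \<phi> x y)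
      in (\<lambda>x y. pdx g1 x y + pdy g2 x y - \<delta> * lap_c (lap_c \<phi>) x y))"

end

theory Submission
  imports Defs
begin

definition SS :: "nat \<Rightarrow> grid \<Rightarrow> real" where
  "SS M f = (\<Sum>i\<in>{1..int M}. \<Sum>j\<in>{1..int M}. f i j)"

lemma SS_add: "SS M (\<lambda>i j. f i j + g i j) = SS M f + SS M g"
  by (simp add: SS_def sum.distrib)
lemma SS_diff: "SS M (\<lambda>i j. f i j - g i j) = SS M f - SS M g"
  by (simp add: SS_def sum_subtractf)
lemma SS_cmult: "SS M (\<lambda>i j. c * f i j) = c * SS M f"
  by (simp add: SS_def sum_distrib_left)
lemma SS_div: "SS M (\<lambda>i j. f i j / c) = SS M f / c"
  by (simp add: SS_def sum_divide_distrib)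
lemma SS_mono: "(\<And>i j. f i j \<le> g i j) \<Longrightarrow> SS M f \<le> SS M g"
  unfolding SS_def by (intro sum_mono) auto
lemma SS_zero: "(\<And>i j. 1 \<le> i \<Longrightarrow> i \<le> int M \<Longrightarrow> 1 \<le> j \<Longrightarrow> j \<le> int M \<Longrightarrow> f i j = 0) \<Longrightarrow> SS M f = 0"
  unfolding SS_def by (intro sum.neutral ballI) auto
lemma SS_nonneg: "(\<And>i j. 0 \<le> f i j) \<Longrightarrow> 0 \<le> SS M f"
  unfolding SS_def by (intro sum_nonneg) auto

lemma sum_shift_int:
  fixes f :: "int \<Rightarrow> real"
  assumes "\<And>i. f (i + int M) = f i"
  shows "(\<Sum>i\<in>{1..int M}. f (i+1)) = (\<Sum>i\<in>{1..int M}. f i)"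
proof (cases "M = 0")
  case True then show ?thesis by simp
next
  case False
  have "(\<Sum>i\<in>{1..int M}. f (i+1)) = (\<Sum>i\<in>{2..int M + 1}. f i)"
    by (rule sum.reindex_bij_witness[of _ "\<lambda>i. i - 1" "\<lambda>i. i + 1"]) auto
  also have "{2..int M + 1} = insert (int M + 1) {2..int M}" using False by auto
  also have "(\<Sum>i\<in>insert (int M + 1) {2..int M}. f i) = f (int M + 1) + (\<Sum>i\<in>{2..int M}. f i)" by simp
  also have "f (int M + 1) = f 1" using assms[of 1] by (simp add: add.commute)
  also have "f 1 + (\<Sum>i\<in>{2..int M}. f i) = (\<Sum>i\<in>insert 1 {2..int M}. f i)" by simp
  also have "insert 1 {2..int M} = {1..int M}" using False by auto
  finally show ?thesis .
qed

lemma per_x: "periodic_grid M v \<Longrightarrow> v (i + int M) j = v i j"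
  by (simp add: periodic_grid_def)
lemma per_y: "periodic_grid M v \<Longrightarrow> v i (j + int M) = v i j"
  by (simp add: periodic_grid_def)

lemma SS_shift_x: assumes "periodic_grid M f" shows "SS M (\<lambda>i j. f (i+1) j) = SS M f"
  unfolding SS_def
  by (rule sum_shift_int[where f="\<lambda>i. \<Sum>j\<in>{1..int M}. f i j"]) (simp add: per_x[OF assms])
lemma SS_shift_y: assumes "periodic_grid M f" shows "SS M (\<lambda>i j. f i (j+1)) = SS M f"
  unfolding SS_def
  by (intro sum.cong refl sum_shift_int[where f="\<lambda>j. f _ j"]) (simp add: per_y[OF assms])

lemma per_shift: assumes "periodic_grid M a" shows "periodic_grid M (\<lambda>i j. a (i + c) (j + d))"
proof -
  have "\<And>i j. a (i + int M + c) (j + d) = a (i + c) (j + d)"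
    using per_x[OF assms] by (metis add.assoc add.commute)
  moreover have "\<And>i j. a (i + c) (j + int M + d) = a (i + c) (j + d)"
    using per_y[OF assms] by (metis add.assoc add.commute)
  ultimately show ?thesis by (simp add: periodic_grid_def)
qed
lemma per_shift_x: assumes "periodic_grid M a" shows "periodic_grid M (\<lambda>i j. a (i + c) j)"
  using per_shift[OF assms, of c 0] by simp
lemma per_shift_y: assumes "periodic_grid M a" shows "periodic_grid M (\<lambda>i j. a i (j + d))"
  using per_shift[OF assms, of 0 d] by simp
lemma per_shift_xm: assumes "periodic_grid M a" shows "periodic_grid M (\<lambda>i j. a (i - c) j)"
  using per_shift[OF assms, of "-c" 0] by simp
lemma per_shift_ym: assumes "periodic_grid M a" shows "periodic_grid M (\<lambda>i j. a i (j - d))"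
  using per_shift[OF assms, of 0 "-d"] by simp
lemma per_pw2: "periodic_grid M a \<Longrightarrow> periodic_grid M b \<Longrightarrow> periodic_grid M (\<lambda>i j. F (a i j) (b i j))"
  by (simp add: periodic_grid_def)
lemma per_pw1: "periodic_grid M a \<Longrightarrow> periodic_grid M (\<lambda>i j. F (a i j))"
  by (simp add: periodic_grid_def)

lemma per_dfx: "periodic_grid M v \<Longrightarrow> periodic_grid M (dfx h v)"
  using per_pw2[OF per_shift_x[of M v 1], of v "\<lambda>x y. (x - y)/h"] by (simp add: dfx_def[abs_def])
lemma per_dfy: "periodic_grid M v \<Longrightarrow> periodic_grid M (dfy h v)"
  using per_pw2[OF per_shift_y[of M v 1], of v "\<lambda>x y. (x - y)/h"] by (simp add: dfy_def[abs_def])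
lemma per_Dcx: "periodic_grid M v \<Longrightarrow> periodic_grid M (Dcx h v)"
  using per_pw2[OF per_shift_x[of M v 1] per_shift_xm[of M v 1], of "\<lambda>x y. (x - y)/(2*h)"] by (simp add: Dcx_def[abs_def])
lemma per_Dcy: "periodic_grid M v \<Longrightarrow> periodic_grid M (Dcy h v)"
  using per_pw2[OF per_shift_y[of M v 1] per_shift_ym[of M v 1], of "\<lambda>x y. (x - y)/(2*h)"] by (simp add: Dcy_def[abs_def])
lemma per_d2x: "periodic_grid M v \<Longrightarrow> periodic_grid M (d2x h v)"
  using per_pw2[OF per_dfx[of M v h] per_shift_xm[OF per_dfx[of M v h], of 1], of "\<lambda>x y. (x - y)/h"] by (simp add: d2x_def[abs_def])
lemma per_d2y: "periodic_grid M v \<Longrightarrow> periodic_grid M (d2y h v)"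
  using per_pw2[OF per_dfy[of M v h] per_shift_ym[OF per_dfy[of M v h], of 1], of "\<lambda>x y. (x - y)/h"] by (simp add: d2y_def[abs_def])
lemma per_lap: "periodic_grid M v \<Longrightarrow> periodic_grid M (lap_h h v)"
  using per_pw2[OF per_d2x[of M v h] per_d2y[of M v h], of "(+)"] by (simp add: lap_h_def[abs_def])

lemma SS_d2x_adj:
  assumes a: "periodic_grid M a" and b: "periodic_grid M b" and h: "h \<noteq> 0"
  shows "SS M (\<lambda>i j. d2x h a i j * b i j) = - SS M (\<lambda>i j. dfx h a i j * dfx h b i j)"
proof -
  have p1: "(\<lambda>i j. d2x h a i j * b i j) = (\<lambda>i j. (a (i+1) j * b i j - 2*(a i j * b i j) + a (i-1) j * b i j)/h\<^sup>2)"
    using h by (intro ext) (simp add: d2x_def dfx_def field_simps power2_eq_square)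
  have p2: "(\<lambda>i j. dfx h a i j * dfx h b i j) = (\<lambda>i j. (a (i+1) j * b (i+1) j - a (i+1) j * b i j - a i j * b (i+1) j + a i j * b i j)/h\<^sup>2)"
    using h by (intro ext) (simp add: dfx_def field_simps power2_eq_square)
  have s1: "SS M (\<lambda>i j. a (i+1) j * b (i+1) j) = SS M (\<lambda>i j. a i j * b i j)"
    using SS_shift_x[OF per_pw2[OF a b, of "(*)"]] by simp
  have s2: "SS M (\<lambda>i j. a i j * b (i+1) j) = SS M (\<lambda>i j. a (i-1) j * b i j)"
    using SS_shift_x[OF per_pw2[OF per_shift_xm[OF a, of 1] b, of "(*)"]] by simp
  show ?thesis
    unfolding p1 p2 SS_div SS_add SS_diff SS_cmult s1 s2 minus_divide_left by (rule arg_cong[where f="\<lambda>x. x / _"]) simp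
qed

lemma SS_d2y_adj:
  assumes a: "periodic_grid M a" and b: "periodic_grid M b" and h: "h \<noteq> 0"
  shows "SS M (\<lambda>i j. d2y h a i j * b i j) = - SS M (\<lambda>i j. dfy h a i j * dfy h b i j)"
proof -
  have p1: "(\<lambda>i j. d2y h a i j * b i j) = (\<lambda>i j. (a i (j+1) * b i j - 2*(a i j * b i j) + a i (j-1) * b i j)/h\<^sup>2)"
    using h by (intro ext) (simp add: d2y_def dfy_def field_simps power2_eq_square)
  have p2: "(\<lambda>i j. dfy h a i j * dfy h b i j) = (\<lambda>i j. (a i (j+1) * b i (j+1) - a i (j+1) * b i j - a i j * b i (j+1) + a i j * b i j)/h\<^sup>2)"
    using h by (intro ext) (simp add: dfy_def field_simps power2_eq_square)
  have s1: "SS M (\<lambda>i j. a i (j+1) * b i (j+1)) = SS M (\<lambda>i j. a i j * b i j)"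
    using SS_shift_y[OF per_pw2[OF a b, of "(*)"]] by simp
  have s2: "SS M (\<lambda>i j. a i j * b i (j+1)) = SS M (\<lambda>i j. a i (j-1) * b i j)"
    using SS_shift_y[OF per_pw2[OF per_shift_ym[OF a, of 1] b, of "(*)"]] by simp
  show ?thesis
    unfolding p1 p2 SS_div SS_add SS_diff SS_cmult s1 s2 minus_divide_left by (rule arg_cong[where f="\<lambda>x. x / _"]) simp
qed

lemma SS_lap_quad:
  assumes a: "periodic_grid M a" and b: "periodic_grid M b" and h: "h \<noteq> 0"
  shows "SS M (\<lambda>i j. lap_h h a i j * b i j) = - (SS M (\<lambda>i j. dfx h a i j * dfx h b i j) + SS M (\<lambda>i j. dfy h a i j * dfy h b i j))"
proof -
  have "(\<lambda>i j. lap_h h a i j * b i j) = (\<lambda>i j. d2x h a i j * b i j + d2y h a i j * b i j)"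
    by (intro ext) (simp add: lap_h_def algebra_simps)
  then show ?thesis using SS_d2x_adj[OF a b h] SS_d2y_adj[OF a b h] by (simp add: SS_add)
qed

lemma SS_lap_adj:
  assumes a: "periodic_grid M a" and b: "periodic_grid M b" and h: "h \<noteq> 0"
  shows "SS M (\<lambda>i j. lap_h h a i j * b i j) = SS M (\<lambda>i j. a i j * lap_h h b i j)"
proof -
  have "SS M (\<lambda>i j. a i j * lap_h h b i j) = SS M (\<lambda>i j. lap_h h b i j * a i j)"
    by (simp add: mult.commute)
  then show ?thesis using SS_lap_quad[OF a b h] SS_lap_quad[OF b a h] by (simp add: mult.commute)
qed

lemma SS_Dcx_adj:
  assumes a: "periodic_grid M a" and b: "periodic_grid M b"
  shows "SS M (\<lambda>i j. Dcx h a i j * b i j) = - SS M (\<lambda>i j. a i j * Dcx h b i j)"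
proof -
  have p1: "(\<lambda>i j. Dcx h a i j * b i j) = (\<lambda>i j. (a (i+1) j * b i j - a (i-1) j * b i j)/(2*h))"
    by (intro ext) (simp add: Dcx_def left_diff_distrib)
  have p2: "(\<lambda>i j. a i j * Dcx h b i j) = (\<lambda>i j. (a i j * b (i+1) j - a i j * b (i-1) j)/(2*h))"
    by (intro ext) (simp add: Dcx_def right_diff_distrib)
  have s1: "SS M (\<lambda>i j. a i j * b (i+1) j) = SS M (\<lambda>i j. a (i-1) j * b i j)"
    using SS_shift_x[OF per_pw2[OF per_shift_xm[OF a, of 1] b, of "(*)"]] by simp
  have s2: "SS M (\<lambda>i j. a (i+1) j * b i j) = SS M (\<lambda>i j. a i j * b (i-1) j)"
    using SS_shift_x[OF per_pw2[OF a per_shift_xm[OF b, of 1], of "(*)"]] by simp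
  show ?thesis
    unfolding p1 p2 SS_div SS_diff s1 s2 minus_divide_left by (rule arg_cong[where f="\<lambda>x. x / _"]) simp
qed

lemma SS_Dcy_adj:
  assumes a: "periodic_grid M a" and b: "periodic_grid M b"
  shows "SS M (\<lambda>i j. Dcy h a i j * b i j) = - SS M (\<lambda>i j. a i j * Dcy h b i j)"
proof -
  have p1: "(\<lambda>i j. Dcy h a i j * b i j) = (\<lambda>i j. (a i (j+1) * b i j - a i (j-1) * b i j)/(2*h))"
    by (intro ext) (simp add: Dcy_def left_diff_distrib)
  have p2: "(\<lambda>i j. a i j * Dcy h b i j) = (\<lambda>i j. (a i j * b i (j+1) - a i j * b i (j-1))/(2*h))"
    by (intro ext) (simp add: Dcy_def right_diff_distrib)
  have s1: "SS M (\<lambda>i j. a i j * b i (j+1)) = SS M (\<lambda>i j. a i (j-1) * b i j)"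
    using SS_shift_y[OF per_pw2[OF per_shift_ym[OF a, of 1] b, of "(*)"]] by simp
  have s2: "SS M (\<lambda>i j. a i (j+1) * b i j) = SS M (\<lambda>i j. a i j * b i (j-1))"
    using SS_shift_y[OF per_pw2[OF a per_shift_ym[OF b, of 1], of "(*)"]] by simp
  show ?thesis
    unfolding p1 p2 SS_div SS_diff s1 s2 minus_divide_left by (rule arg_cong[where f="\<lambda>x. x / _"]) simp
qed

lemma SS_Dcx_sq:
  assumes w: "periodic_grid M w"
  shows "SS M (\<lambda>i j. (Dcx h w i j)\<^sup>2) \<le> SS M (\<lambda>i j. (dfx h w i j)\<^sup>2)"
proof -
  have "SS M (\<lambda>i j. (Dcx h w i j)\<^sup>2) \<le> SS M (\<lambda>i j. ((dfx h w i j)\<^sup>2 + (dfx h w (i-1) j)\<^sup>2)/2)"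
  proof (rule SS_mono)
    fix i j
    have e: "Dcx h w i j = (dfx h w i j + dfx h w (i-1) j)/2"
      by (simp add: Dcx_def dfx_def add_divide_distrib[symmetric] divide_divide_eq_left mult.commute)
    show "(Dcx h w i j)\<^sup>2 \<le> ((dfx h w i j)\<^sup>2 + (dfx h w (i-1) j)\<^sup>2)/2"
      unfolding e using sum_squares_ge_zero[of "dfx h w i j - dfx h w (i-1) j" 0] 
      by (simp add: power2_eq_square field_simps)
  qed
  also have "\<dots> = SS M (\<lambda>i j. (dfx h w i j)\<^sup>2)"
  proof -
    have "SS M (\<lambda>i j. (dfx h w (i-1) j)\<^sup>2) = SS M (\<lambda>i j. (dfx h w i j)\<^sup>2)"
      using SS_shift_x[OF per_pw1[OF per_shift_xm[OF per_dfx[OF w, where h=h], where c=1], of "\<lambda>x. x\<^sup>2"]] by simp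
    then show ?thesis unfolding SS_div SS_add by simp
  qed
  finally show ?thesis .
qed

lemma SS_Dcy_sq:
  assumes w: "periodic_grid M w"
  shows "SS M (\<lambda>i j. (Dcy h w i j)\<^sup>2) \<le> SS M (\<lambda>i j. (dfy h w i j)\<^sup>2)"
proof -
  have "SS M (\<lambda>i j. (Dcy h w i j)\<^sup>2) \<le> SS M (\<lambda>i j. ((dfy h w i j)\<^sup>2 + (dfy h w i (j-1))\<^sup>2)/2)"
  proof (rule SS_mono)
    fix i j
    have e: "Dcy h w i j = (dfy h w i j + dfy h w i (j-1))/2"
      by (simp add: Dcy_def dfy_def add_divide_distrib[symmetric] divide_divide_eq_left mult.commute)
    show "(Dcy h w i j)\<^sup>2 \<le> ((dfy h w i j)\<^sup>2 + (dfy h w i (j-1))\<^sup>2)/2"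
      unfolding e using sum_squares_ge_zero[of "dfy h w i j - dfy h w i (j-1)" 0] 
      by (simp add: power2_eq_square field_simps)
  qed
  also have "\<dots> = SS M (\<lambda>i j. (dfy h w i j)\<^sup>2)"
  proof -
    have "SS M (\<lambda>i j. (dfy h w i (j-1))\<^sup>2) = SS M (\<lambda>i j. (dfy h w i j)\<^sup>2)"
      using SS_shift_y[OF per_pw1[OF per_shift_ym[OF per_dfy[OF w, where h=h], where d=1], of "\<lambda>x. x\<^sup>2"]] by simp
    then show ?thesis unfolding SS_div SS_add by simp
  qed
  finally show ?thesis .
qed

lemma nonlin_pt:
  fixes p q p' q' :: real
  shows "((p\<^sup>2+q\<^sup>2-1)*p)*(p-p') + ((p\<^sup>2+q\<^sup>2-1)*q)*(q-q') \<ge>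
     (p\<^sup>2+q\<^sup>2-1)\<^sup>2/4 - (p'\<^sup>2+q'\<^sup>2-1)\<^sup>2/4 - ((p-p')\<^sup>2 + (q-q')\<^sup>2)/2"
proof -
  define s where "s = p\<^sup>2+q\<^sup>2"
  define t where "t = p'\<^sup>2+q'\<^sup>2"
  define c where "c = p*p'+q*q'"
  have id: "((p\<^sup>2+q\<^sup>2-1)*p)*(p-p') + ((p\<^sup>2+q\<^sup>2-1)*q)*(q-q') -
     ((p\<^sup>2+q\<^sup>2-1)\<^sup>2/4 - (p'\<^sup>2+q'\<^sup>2-1)\<^sup>2/4 - ((p-p')\<^sup>2 + (q-q')\<^sup>2)/2)
     = (3*(s * s) - 4*(s * c) + t*t)/4"
    unfolding s_def t_def c_def by (simp add: power2_eq_square field_simps)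
  have s0: "0 \<le> s" unfolding s_def by simp
  have c2: "2*c \<le> s+t"
    using sum_squares_ge_zero[of "p-p'" "q-q'"] unfolding s_def t_def c_def
    by (simp add: power2_eq_square algebra_simps)
  have "s*(2*c) \<le> s*(s+t)" using mult_left_mono[OF c2 s0] .
  moreover have "0 \<le> (s-t)*(s-t)" by simp
  ultimately have "0 \<le> 3*(s * s) - 4*(s * c) + t*t" by (simp add: algebra_simps)
  then show ?thesis using id by (metis diff_ge_0_iff_ge divide_nonneg_pos zero_less_numeral)
qed

lemma young_pt:
  fixes L x d :: real assumes d: "d > 0"
  shows "- (L*x) \<le> d * L\<^sup>2 + x\<^sup>2/(4*d)"
proof -
  have "0 \<le> (2*d*L + x)\<^sup>2" by simp
  then have "0 \<le> 4*d*d*L\<^sup>2 + 4*d*(L*x) + x\<^sup>2" by (simp add: power2_eq_square algebra_simps)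
  then have "0 \<le> (4*d*d*L\<^sup>2 + 4*d*(L*x) + x\<^sup>2)/(4*d)" using d by simp
  also have "\<dots> = d * L\<^sup>2 + (L*x) + x\<^sup>2/(4*d)" using d by (simp add: field_simps power2_eq_square)
  finally show ?thesis by linarith
qed

lemma final_arith:
  fixes \<delta> A B Lw D0 P Q F G1 G2 Ga Gb X Y dx dy R W :: real
  assumes d: "\<delta> > 0" and e0: "D0 + \<delta>*P - F = 0" and e1: "P = Q" and e2: "Q = 1/2*A - 1/2*B + 1/2*Lw"
    and e3: "F = -(G1+G2)" and e4: "Ga/4 - Gb/4 - (X+Y)/2 \<le> G1+G2" and "X \<le> dx" "Y \<le> dy"
    and "R = -(dx+dy)" and e6: "-R \<le> \<delta>*Lw + W/(4*\<delta>)"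
  shows "\<delta>/2*A + 1/4*Ga + D0 - 1/(8*\<delta>)*W \<le> \<delta>/2*B + 1/4*Gb"
proof -
  have "\<delta>*P = (\<delta>*A)/2 - (\<delta>*B)/2 + (\<delta>*Lw)/2" unfolding e1 e2 by (simp add: algebra_simps)
  moreover have "1/(8*\<delta>)*W = (W/(4*\<delta>))/2" by simp
  moreover have "\<delta>/2*A = (\<delta>*A)/2" "\<delta>/2*B = (\<delta>*B)/2" by simp_all
  ultimately show ?thesis using assms by argo
qed

lemma step_core:
  assumes a: "periodic_grid M a" and b: "periodic_grid M b" and h: "h \<noteq> 0" and d: "\<delta> > 0"
    and w: "\<And>i j. w i j = a i j - b i j"
    and sch: "\<And>i j. 1 \<le> i \<Longrightarrow> i \<le> int M \<Longrightarrow> 1 \<le> j \<Longrightarrow> j \<le> int M \<Longrightarrow>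
        D i j + \<delta> * lap_h h (lap_h h a) i j - div_f_grad_h h a i j = 0"
  shows "\<delta>/2 * SS M (\<lambda>i j. (lap_h h a i j)\<^sup>2) + 1/4 * SS M (\<lambda>i j. ((Dcx h a i j)\<^sup>2 + (Dcy h a i j)\<^sup>2 - 1)\<^sup>2)
       + SS M (\<lambda>i j. D i j * w i j) - 1/(8*\<delta>) * SS M (\<lambda>i j. (w i j)\<^sup>2)
     \<le> \<delta>/2 * SS M (\<lambda>i j. (lap_h h b i j)\<^sup>2) + 1/4 * SS M (\<lambda>i j. ((Dcx h b i j)\<^sup>2 + (Dcy h b i j)\<^sup>2 - 1)\<^sup>2)"
proof -
  have wfun: "w = (\<lambda>i j. a i j - b i j)" using w by (intro ext) simp
  have pw: "periodic_grid M w" unfolding wfun by (rule per_pw2[OF a b])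
  define g1 where "g1 = (\<lambda>i j. ((Dcx h a i j)\<^sup>2 + (Dcy h a i j)\<^sup>2 - 1) * Dcx h a i j)"
  define g2 where "g2 = (\<lambda>i j. ((Dcx h a i j)\<^sup>2 + (Dcy h a i j)\<^sup>2 - 1) * Dcy h a i j)"
  have pg1: "periodic_grid M g1" unfolding g1_def
    by (rule per_pw2[OF per_Dcx[OF a] per_Dcy[OF a], where F="\<lambda>x y. (x\<^sup>2+y\<^sup>2-1)*x"])
  have pg2: "periodic_grid M g2" unfolding g2_def
    by (rule per_pw2[OF per_Dcx[OF a] per_Dcy[OF a], where F="\<lambda>x y. (x\<^sup>2+y\<^sup>2-1)*y"])
  have divf: "div_f_grad_h h a = (\<lambda>i j. Dcx h g1 i j + Dcy h g2 i j)"
    unfolding div_f_grad_h_def g1_def g2_def Let_def ..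
  have e0: "SS M (\<lambda>i j. D i j * w i j) + \<delta> * SS M (\<lambda>i j. lap_h h (lap_h h a) i j * w i j)
      - SS M (\<lambda>i j. div_f_grad_h h a i j * w i j) = 0"
  proof -
    have "SS M (\<lambda>i j. (D i j + \<delta> * lap_h h (lap_h h a) i j - div_f_grad_h h a i j) * w i j) = 0"
      by (rule SS_zero) (simp add: sch)
    moreover have "(\<lambda>i j. (D i j + \<delta> * lap_h h (lap_h h a) i j - div_f_grad_h h a i j) * w i j)
       = (\<lambda>i j. D i j * w i j + \<delta> * (lap_h h (lap_h h a) i j * w i j) - div_f_grad_h h a i j * w i j)"
      by (intro ext) (simp add: algebra_simps)
    ultimately show ?thesis by (simp only: SS_add SS_diff SS_cmult)
  qed
  have lapw: "\<And>i j. lap_h h w i j = lap_h h a i j - lap_h h b i j"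
    unfolding wfun using h by (simp add: lap_h_def d2x_def d2y_def dfx_def dfy_def field_simps)
  have e1: "SS M (\<lambda>i j. lap_h h (lap_h h a) i j * w i j) = SS M (\<lambda>i j. lap_h h a i j * lap_h h w i j)"
    by (rule SS_lap_adj[OF per_lap[OF a] pw h])
  have e2: "SS M (\<lambda>i j. lap_h h a i j * lap_h h w i j) = 1/2 * SS M (\<lambda>i j. (lap_h h a i j)\<^sup>2)
     - 1/2 * SS M (\<lambda>i j. (lap_h h b i j)\<^sup>2) + 1/2 * SS M (\<lambda>i j. (lap_h h w i j)\<^sup>2)"
  proof -
    have "(\<lambda>i j. lap_h h a i j * lap_h h w i j) = (\<lambda>i j. 1/2 * (lap_h h a i j)\<^sup>2
     - 1/2 * (lap_h h b i j)\<^sup>2 + 1/2 * (lap_h h w i j)\<^sup>2)"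
      by (intro ext) (simp add: lapw power2_eq_square algebra_simps)
    then show ?thesis by (simp only: SS_add SS_diff SS_cmult)
  qed
  have e3: "SS M (\<lambda>i j. div_f_grad_h h a i j * w i j) = - (SS M (\<lambda>i j. g1 i j * Dcx h w i j) + SS M (\<lambda>i j. g2 i j * Dcy h w i j))"
  proof -
    have "(\<lambda>i j. div_f_grad_h h a i j * w i j) = (\<lambda>i j. Dcx h g1 i j * w i j + Dcy h g2 i j * w i j)"
      unfolding divf by (intro ext) (simp add: algebra_simps)
    then show ?thesis using SS_Dcx_adj[OF pg1 pw] SS_Dcy_adj[OF pg2 pw] by (simp add: SS_add)
  qed
  have Dw: "\<And>i j. Dcx h w i j = Dcx h a i j - Dcx h b i j" "\<And>i j. Dcy h w i j = Dcy h a i j - Dcy h b i j"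
    unfolding wfun by (simp_all add: Dcx_def Dcy_def diff_divide_distrib)
  have e4: "SS M (\<lambda>i j. ((Dcx h a i j)\<^sup>2 + (Dcy h a i j)\<^sup>2 - 1)\<^sup>2/4 - ((Dcx h b i j)\<^sup>2 + (Dcy h b i j)\<^sup>2 - 1)\<^sup>2/4
      - ((Dcx h w i j)\<^sup>2 + (Dcy h w i j)\<^sup>2)/2) \<le> SS M (\<lambda>i j. g1 i j * Dcx h w i j + g2 i j * Dcy h w i j)"
    by (rule SS_mono) (simp only: Dw g1_def g2_def nonlin_pt)
  have e5a: "SS M (\<lambda>i j. (Dcx h w i j)\<^sup>2) \<le> SS M (\<lambda>i j. dfx h w i j * dfx h w i j)"
    using SS_Dcx_sq[OF pw, of h] by (simp add: power2_eq_square)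
  have e5b: "SS M (\<lambda>i j. (Dcy h w i j)\<^sup>2) \<le> SS M (\<lambda>i j. dfy h w i j * dfy h w i j)"
    using SS_Dcy_sq[OF pw, of h] by (simp add: power2_eq_square)
  have e5c: "SS M (\<lambda>i j. lap_h h w i j * w i j) = - (SS M (\<lambda>i j. dfx h w i j * dfx h w i j) + SS M (\<lambda>i j. dfy h w i j * dfy h w i j))"
    by (rule SS_lap_quad[OF pw pw h])
  have e6: "- SS M (\<lambda>i j. lap_h h w i j * w i j) \<le> \<delta> * SS M (\<lambda>i j. (lap_h h w i j)\<^sup>2) + SS M (\<lambda>i j. (w i j)\<^sup>2) / (4*\<delta>)"
  proof -
    have "SS M (\<lambda>i j. - (lap_h h w i j * w i j)) \<le> SS M (\<lambda>i j. \<delta> * (lap_h h w i j)\<^sup>2 + (w i j)\<^sup>2 / (4*\<delta>))"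
      by (rule SS_mono) (rule young_pt[OF d])
    moreover have "SS M (\<lambda>i j. - (lap_h h w i j * w i j)) = - SS M (\<lambda>i j. lap_h h w i j * w i j)"
      using SS_cmult[of M "-1" "\<lambda>i j. lap_h h w i j * w i j"] by simp
    ultimately show ?thesis by (simp only: SS_add SS_cmult SS_div)
  qed
  have e4': "SS M (\<lambda>i j. ((Dcx h a i j)\<^sup>2 + (Dcy h a i j)\<^sup>2 - 1)\<^sup>2)/4 - SS M (\<lambda>i j. ((Dcx h b i j)\<^sup>2 + (Dcy h b i j)\<^sup>2 - 1)\<^sup>2)/4
      - (SS M (\<lambda>i j. (Dcx h w i j)\<^sup>2) + SS M (\<lambda>i j. (Dcy h w i j)\<^sup>2))/2 \<le> SS M (\<lambda>i j. g1 i j * Dcx h w i j) + SS M (\<lambda>i j. g2 i j * Dcy h w i j)"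
    using e4 by (simp only: SS_add SS_diff SS_div)
  have "1/(8*\<delta>) * SS M (\<lambda>i j. (w i j)\<^sup>2) = (SS M (\<lambda>i j. (w i j)\<^sup>2) / (4*\<delta>))/2" by simp
  show ?thesis by (rule final_arith[OF d e0 e1 e2 e3 e4' e5a e5b e5c e6])
qed

lemma powr32: "0 \<le> (r::real) \<Longrightarrow> r powr (3/2) = r * sqrt r"
proof -
  assume r: "0 \<le> r"
  have "r powr (3/2) = r powr (1 + 1/2)" by simp
  also have "\<dots> = r powr 1 * r powr (1/2)" by (rule powr_add)
  also have "\<dots> = r * sqrt r" using r by (simp add: powr_half_sqrt)
  finally show ?thesis .
qed

lemma coef_id: fixes \<tau> r \<rho> P \<sigma> :: real assumes "\<tau> \<noteq> 0" "1 + r \<noteq> 0" "1 + \<rho> \<noteq> 0"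
  shows "(1+2*r)/(\<tau>*(1+r)) - r*\<sigma>/(2*(\<tau>*(1+r))) - P/(2*(1+\<rho>)*\<tau>) = ((2+4*r - r*\<sigma>)/(1+r) - P/(1+\<rho>))/(2*\<tau>)"
proof -
  have "(1+2*r)/(\<tau>*(1+r)) - r*\<sigma>/(2*(\<tau>*(1+r))) = ((2+4*r - r*\<sigma>)/(1+r))/(2*\<tau>)"
    using assms by (simp add: divide_simps) (simp add: algebra_simps)
  moreover have "P/(2*(1+\<rho>)*\<tau>) = (P/(1+\<rho>))/(2*\<tau>)" by simp
  ultimately show ?thesis by (simp add: diff_divide_distrib)
qed

lemma step_ge2:
  fixes r \<tau> \<tau>p \<rho> \<delta> Ea Eb :: real and D v w :: grid
  assumes core: "Ea + SS M (\<lambda>i j. D i j * w i j) - 1/(8*\<delta>) * SS M (\<lambda>i j. (w i j)\<^sup>2) \<le> Eb"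
    and D: "\<And>i j. D i j = (1+2*r)/(\<tau>*(1+r)) * w i j + (-(r\<^sup>2)/(\<tau>*(1+r))) * v i j"
    and r: "r > 0" and tau: "\<tau> > 0" and taup: "\<tau>p > 0" and rdef: "r = \<tau>/\<tau>p"
    and rho: "\<rho> \<ge> 0" and d: "\<delta> > 0" and bound: "\<tau> < 4*\<delta>*R_L r \<rho>"
  shows "Ea + \<rho> powr (3/2) / (2*(1+\<rho>)*\<tau>) * SS M (\<lambda>i j. (w i j)\<^sup>2)
     \<le> Eb + r powr (3/2) / (2*(1+r)*\<tau>p) * SS M (\<lambda>i j. (v i j)\<^sup>2)"
proof -
  define \<sigma> where "\<sigma> = sqrt r"
  have s0: "\<sigma> \<ge> 0" unfolding \<sigma>_def using r by simp
  have ss: "\<sigma>*\<sigma> = r" unfolding \<sigma>_def using r by (metis less_imp_le real_sqrt_pow2 power2_eq_square)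
  define W where "W = SS M (\<lambda>i j. (w i j)\<^sup>2)"
  define V where "V = SS M (\<lambda>i j. (v i j)\<^sup>2)"
  define X where "X = SS M (\<lambda>i j. v i j * w i j)"
  define b0 where "b0 = (1+2*r)/(\<tau>*(1+r))"
  define c0 where "c0 = \<tau>*(1+r)"
  have c0nz: "c0 \<noteq> 0" "c0 > 0" unfolding c0_def using tau r by auto
  define K3 where "K3 = r*\<sigma>/(2*c0)"
  define K5 where "K5 = r*r*\<sigma>/(2*c0)"
  define g where "g = \<rho> powr (3/2) / (2*(1+\<rho>)*\<tau>)"
  have W0: "W \<ge> 0" unfolding W_def by (rule SS_nonneg) simp
  have SD: "SS M (\<lambda>i j. D i j * w i j) = b0 * W + (-(r\<^sup>2)/(\<tau>*(1+r))) * X"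
  proof -
    have "(\<lambda>i j. D i j * w i j) = (\<lambda>i j. b0 * (w i j)\<^sup>2 + (-(r\<^sup>2)/(\<tau>*(1+r))) * (v i j * w i j))"
      by (intro ext) (simp add: D b0_def power2_eq_square algebra_simps)
    then show ?thesis unfolding W_def X_def by (simp only: SS_add SS_cmult)
  qed
  have pX: "(-(r\<^sup>2)/(\<tau>*(1+r))) * X \<ge> - K5 * V - K3 * W"
  proof -
    have "SS M (\<lambda>i j. - K5 * (v i j)\<^sup>2 - K3 * (w i j)\<^sup>2) \<le> SS M (\<lambda>i j. (-(r\<^sup>2)/(\<tau>*(1+r))) * (v i j * w i j))"
    proof (rule SS_mono)
      fix i j
      let ?x = "v i j" and ?y = "w i j"
      have c: "0 < 2*\<tau>*(1+r)" using tau r by simp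
      have "0 \<le> \<sigma>*r*(\<sigma>*?x - ?y)\<^sup>2" using s0 r by simp
      then have "0 \<le> r*r*\<sigma>*?x\<^sup>2 - 2*(r\<^sup>2*(?x*?y)) + r*\<sigma>*?y\<^sup>2"
        using ss by (simp add: power2_eq_square algebra_simps) (metis mult.assoc mult.commute)
      then have "0 \<le> (r*r*\<sigma>*?x\<^sup>2 - 2*(r\<^sup>2*(?x*?y)) + r*\<sigma>*?y\<^sup>2) / (2*c0)"
        using c0nz by simp
      moreover have "(r*r*\<sigma>*?x\<^sup>2 - 2*(r\<^sup>2*(?x*?y)) + r*\<sigma>*?y\<^sup>2) / (2*c0)
         = K5 * ?x\<^sup>2 + K3 * ?y\<^sup>2 + (-(r\<^sup>2)/c0) * (?x * ?y)"
        unfolding K5_def K3_def using c0nz by (simp add: field_simps power2_eq_square)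
      moreover have e3: "(-(r\<^sup>2)/(\<tau>*(1+r))) = (-(r\<^sup>2)/c0)" unfolding c0_def ..
      ultimately show "- K5 * ?x\<^sup>2 - K3 * ?y\<^sup>2 \<le> (-(r\<^sup>2)/(\<tau>*(1+r))) * (?x * ?y)"
        unfolding e3 by linarith
    qed
    then show ?thesis unfolding V_def W_def X_def by (simp only: SS_diff SS_cmult)
  qed
  have RL: "R_L r \<rho> = (2+4*r - r*\<sigma>)/(1+r) - \<rho> powr (3/2)/(1+\<rho>)"
    unfolding R_L_def \<sigma>_def using powr32[of r] r by simp
  have coef: "g \<le> b0 - K3 - 1/(8*\<delta>)"
  proof -
    have e: "b0 - K3 - g = R_L r \<rho> / (2*\<tau>)"
      proof -
      have nz: "\<tau> \<noteq> 0" "1 + r \<noteq> 0" "1 + \<rho> \<noteq> 0" using tau r rho by auto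
      show ?thesis unfolding RL b0_def K3_def g_def c0_def by (rule coef_id[OF nz])
    qed
    have "1/(8*\<delta>) < R_L r \<rho> / (2*\<tau>)"
      using bound tau d by (simp add: field_simps)
    then show ?thesis using e by linarith
  qed
  have K5e: "K5 = r powr (3/2) / (2*(1+r)*\<tau>p)"
  proof -
    have tp: "\<tau> = r*\<tau>p" using rdef taup by simp
    have nz: "r \<noteq> 0" "\<tau>p \<noteq> 0" "1 + r \<noteq> 0" using r taup by auto
    show ?thesis
      unfolding K5_def c0_def powr32[OF less_imp_le[OF r]] \<sigma>_def[symmetric] tp
      using nz by (simp add: divide_simps)
  qed
  have "g * W \<le> (b0 - K3 - 1/(8*\<delta>)) * W" using mult_right_mono[OF coef W0] .
  then have "Ea + g * W \<le> Eb + K5 * V"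
    using core SD pX unfolding W_def[symmetric] by (simp add: algebra_simps)
  then show ?thesis unfolding g_def K5e V_def W_def .
qed

lemma step_1:
  fixes \<tau> \<rho> \<delta> Ea Eb :: real and D w :: grid
  assumes core: "Ea + SS M (\<lambda>i j. D i j * w i j) - 1/(8*\<delta>) * SS M (\<lambda>i j. (w i j)\<^sup>2) \<le> Eb"
    and D: "\<And>i j. D i j = 2/\<tau> * w i j"
    and tau: "\<tau> > 0" and rho: "\<rho> \<ge> 0" and d: "\<delta> > 0" and bound: "\<tau> < 4*\<delta>*R_L 0 \<rho>"
  shows "Ea + \<rho> powr (3/2) / (2*(1+\<rho>)*\<tau>) * SS M (\<lambda>i j. (w i j)\<^sup>2) \<le> Eb"
proof -
  define W where "W = SS M (\<lambda>i j. (w i j)\<^sup>2)"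
  define g where "g = \<rho> powr (3/2) / (2*(1+\<rho>)*\<tau>)"
  have W0: "W \<ge> 0" unfolding W_def by (rule SS_nonneg) simp
  have g0: "g \<ge> 0" unfolding g_def using tau rho by simp
  have SD: "SS M (\<lambda>i j. D i j * w i j) = 2/\<tau> * W"
  proof -
    have "(\<lambda>i j. D i j * w i j) = (\<lambda>i j. 2/\<tau> * (w i j)\<^sup>2)"
      by (intro ext) (simp add: D power2_eq_square)
    then show ?thesis unfolding W_def by (simp only: SS_cmult)
  qed
  have RL: "R_L 0 \<rho> = 2 - \<rho> powr (3/2)/(1+\<rho>)" unfolding R_L_def by simp
  have coef: "g \<le> 2/\<tau> - 1/(8*\<delta>)"
  proof -
    have "1/(8*\<delta>) < R_L 0 \<rho> / (2*\<tau>)"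
      using bound tau d by (simp add: field_simps)
    moreover have "R_L 0 \<rho> / (2*\<tau>) = 1/\<tau> - g" unfolding RL g_def using tau rho by (simp add: diff_divide_distrib)
    moreover have "1/\<tau> \<le> 2/\<tau>" using tau by (simp add: divide_right_mono)
    ultimately show ?thesis using g0 by linarith
  qed
  have "g * W \<le> (2/\<tau> - 1/(8*\<delta>)) * W" using mult_right_mono[OF coef W0] .
  then have "Ea + g * W \<le> Eb"
    using core SD unfolding W_def[symmetric] by (simp add: algebra_simps)
  then show ?thesis unfolding g_def W_def .
qed

lemma norm_sq: "(norm_h h M v)\<^sup>2 = h\<^sup>2 * SS M (\<lambda>i j. (v i j)\<^sup>2)"
proof -
  have "0 \<le> (\<Sum>i\<in>{1..int M}. \<Sum>j\<in>{1..int M}. v i j * v i j)" by (intro sum_nonneg) simp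
  then have "0 \<le> ip_h h M v v" unfolding ip_h_def by simp
  then show ?thesis unfolding norm_h_def ip_h_def SS_def by (simp add: power2_eq_square)
qed

lemma energy_SS: "energy_h \<delta> h M v = h\<^sup>2 * (\<delta>/2 * SS M (\<lambda>i j. (lap_h h v i j)\<^sup>2)
   + 1/4 * SS M (\<lambda>i j. ((Dcx h v i j)\<^sup>2 + (Dcy h v i j)\<^sup>2 - 1)\<^sup>2))"
  unfolding energy_h_def norm_sq by (simp add: algebra_simps)

lemma D2_1: "D2 t N rN1 u 1 i j = 2 / tstep t 1 * (u 1 i j - u 0 i j)"
  unfolding D2_def by (simp add: bdf2_kernel_def)

lemma D2_ge2:
  assumes n: "2 \<le> n"
  shows "D2 t N rN1 u n i j = (1+2*ratio t N rN1 n)/(tstep t n*(1+ratio t N rN1 n)) * (u n i j - u (n-1) i j)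
     + (-((ratio t N rN1 n)\<^sup>2)/(tstep t n*(1+ratio t N rN1 n))) * (u (n-1) i j - u (n-2) i j)"
proof -
  obtain m where m: "n = Suc (Suc m)" using n by (metis add_2_eq_Suc le_Suc_ex)
  have S: "{1..Suc (Suc m)} = insert (Suc (Suc m)) (insert (Suc m) {1..m})" by auto
  have Z: "(\<Sum>k\<in>{1..m}. bdf2_kernel t N rN1 (Suc (Suc m)) (Suc (Suc m)-k) * (u k i j - u (k-1) i j)) = 0"
    by (intro sum.neutral ballI) (auto simp: bdf2_kernel_def Let_def)
  have k0: "bdf2_kernel t N rN1 n 0 = (1+2*ratio t N rN1 n)/(tstep t n*(1+ratio t N rN1 n))"
    using n by (simp add: bdf2_kernel_def Let_def)
  have k1: "bdf2_kernel t N rN1 n 1 = (-((ratio t N rN1 n)\<^sup>2)/(tstep t n*(1+ratio t N rN1 n)))"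
    using n by (simp add: bdf2_kernel_def Let_def)
  have e: "Suc (Suc m) - Suc m = 1" by simp
  show ?thesis unfolding D2_def m S using k0[unfolded m] k1[unfolded m One_nat_def] Z
    by (simp add: sum.insert)
qed

theorem theorem2p2:
  fixes L \<delta> T rs rN1 :: real and M N :: nat
    and t :: "nat \<Rightarrow> real"
    and \<phi>0 :: "real \<Rightarrow> real \<Rightarrow> real"
    and u :: "nat \<Rightarrow> int \<Rightarrow> int \<Rightarrow> real"
  defines "h \<equiv> mesh L M"
  assumes L_pos: "L > 0" and M_pos: "M > 0" and delta_pos: "\<delta> > 0"
    and rs: "0 < rs" "rs < 4.864"
    and t0: "t 0 = 0" and tN: "t N = T"
    and t_mono: "\<And>n. 1 \<le> n \<Longrightarrow> n \<le> N \<Longrightarrow> t (n - 1) < t n"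
    and rN1: "0 < rN1" "rN1 \<le> rs"
    and phi0_per: "\<And>x y. \<phi>0 (x + L) y = \<phi>0 x y" "\<And>x y. \<phi>0 x (y + L) = \<phi>0 x y"
    and u_per: "\<And>n. n \<le> N \<Longrightarrow> periodic_grid M (u n)"
    and u_init: "\<And>i j. 0 \<le> i \<Longrightarrow> i \<le> int M \<Longrightarrow> 0 \<le> j \<Longrightarrow> j \<le> int M \<Longrightarrow>
        u 0 i j = \<phi>0 (real_of_int i * h) (real_of_int j * h)
                  - tstep t 1 / 2 * phi1 \<delta> \<phi>0 (real_of_int i * h) (real_of_int j * h)"
    and scheme: "\<And>n i j. 1 \<le> n \<Longrightarrow> n \<le> N \<Longrightarrow> 1 \<le> i \<Longrightarrow> i \<le> int M \<Longrightarrow> 1 \<le> j \<Longrightarrow> j \<le> int M \<Longrightarrow>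
        D2 t N rN1 u n i j + \<delta> * lap_h h (lap_h h (u n)) i j - div_f_grad_h h (u n) i j = 0"
    and ratio_bound: "\<And>k. 2 \<le> k \<Longrightarrow> k \<le> N \<Longrightarrow> ratio t N rN1 k \<le> rs"
    and step_bound: "\<And>n. 1 \<le> n \<Longrightarrow> n \<le> N \<Longrightarrow>
        tstep t n < 4 * \<delta> * min (R_L (ratio t N rN1 n) (ratio t N rN1 (n + 1)))
                                 ((2 + ratio t N rN1 2) / (1 + ratio t N rN1 2))"
  shows "\<forall>n\<in>{1..N}.
           energy_h \<delta> h M (u n) \<le> mod_energy \<delta> h M t N rN1 u n
         \<and> mod_energy \<delta> h M t N rN1 u n \<le> mod_energy \<delta> h M t N rN1 u (n - 1)
         \<and> mod_energy \<delta> h M t N rN1 u (n - 1) \<le> energy_h \<delta> h M (u 0)"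
proof -
  have hpos: "h > 0" unfolding h_def mesh_def using L_pos M_pos by simp
  then have hnz: "h \<noteq> 0" by simp
  have tau_pos: "\<And>n. 1 \<le> n \<Longrightarrow> n \<le> N \<Longrightarrow> tstep t n > 0" using t_mono by (simp add: tstep_def)
  have ratio_eq: "\<And>n. 2 \<le> n \<Longrightarrow> n \<le> N \<Longrightarrow> ratio t N rN1 n = tstep t n / tstep t (n-1)"
    by (simp add: ratio_def)
  have ratio_pos: "\<And>n. 2 \<le> n \<Longrightarrow> n \<le> N+1 \<Longrightarrow> ratio t N rN1 n > 0"
  proof -
    fix n assume n2: "2 \<le> n" and nN: "n \<le> N+1"
    show "ratio t N rN1 n > 0"
    proof (cases "n = N+1")
      case True then show ?thesis using n2 rN1 by (simp add: ratio_def)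
    next
      case False
      then have "n \<le> N" using nN by simp
      then show ?thesis using ratio_eq[OF n2] tau_pos[of n] tau_pos[of "n-1"] n2 by simp
    qed
  qed
  define Ec where "Ec = (\<lambda>v. \<delta>/2 * SS M (\<lambda>i j. (lap_h h v i j)\<^sup>2)
     + 1/4 * SS M (\<lambda>i j. ((Dcx h v i j)\<^sup>2 + (Dcy h v i j)\<^sup>2 - 1)\<^sup>2))"
  have En: "\<And>v. energy_h \<delta> h M v = h\<^sup>2 * Ec v" unfolding Ec_def by (rule energy_SS)
  have core: "\<And>n. 1 \<le> n \<Longrightarrow> n \<le> N \<Longrightarrow> Ec (u n) + SS M (\<lambda>i j. D2 t N rN1 u n i j * (u n i j - u (n-1) i j))
      - 1/(8*\<delta>) * SS M (\<lambda>i j. (u n i j - u (n-1) i j)\<^sup>2) \<le> Ec (u (n-1))"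
  proof -
    fix n assume n1: "1 \<le> n" and nN: "n \<le> N"
    show "?thesis n" unfolding Ec_def
      by (rule step_core[where a="u n" and b="u (n-1)" and w="\<lambda>i j. u n i j - u (n-1) i j"
          and D="D2 t N rN1 u n", OF u_per u_per hnz delta_pos])
         (use n1 nN scheme in auto)
  qed
  have me: "\<And>n. 1 \<le> n \<Longrightarrow> mod_energy \<delta> h M t N rN1 u n = h\<^sup>2 * (Ec (u n)
      + ratio t N rN1 (n+1) powr (3/2) / (2*(1+ratio t N rN1 (n+1))*tstep t n) * SS M (\<lambda>i j. (u n i j - u (n-1) i j)\<^sup>2))"
  proof -
    fix n :: nat assume n1: "1 \<le> n"
    have "mod_energy \<delta> h M t N rN1 u n = h\<^sup>2 * Ec (u n)
      + ratio t N rN1 (n+1) powr (3/2) / (2*(1+ratio t N rN1 (n+1))*tstep t n) * (h\<^sup>2 * SS M (\<lambda>i j. (u n i j - u (n-1) i j)\<^sup>2))"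
      using n1 unfolding mod_energy_def En norm_sq by simp
    also have "\<dots> = h\<^sup>2 * (Ec (u n)
      + ratio t N rN1 (n+1) powr (3/2) / (2*(1+ratio t N rN1 (n+1))*tstep t n) * SS M (\<lambda>i j. (u n i j - u (n-1) i j)\<^sup>2))"
      by (simp only: distrib_left mult.left_commute)
    finally show "?thesis n" .
  qed
  have me0: "mod_energy \<delta> h M t N rN1 u 0 = h\<^sup>2 * Ec (u 0)" by (simp add: mod_energy_def En)
  have step: "\<And>n. 1 \<le> n \<Longrightarrow> n \<le> N \<Longrightarrow> mod_energy \<delta> h M t N rN1 u n \<le> mod_energy \<delta> h M t N rN1 u (n-1)"
  proof -
    fix n assume n1: "1 \<le> n" and nN: "n \<le> N"
    have rho: "ratio t N rN1 (n+1) \<ge> 0" using ratio_pos[of "n+1"] n1 nN by simp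
    have bnd: "tstep t n < 4*\<delta>*R_L (ratio t N rN1 n) (ratio t N rN1 (n+1))"
    proof -
      have "4*\<delta>*min (R_L (ratio t N rN1 n) (ratio t N rN1 (n+1))) ((2 + ratio t N rN1 2) / (1 + ratio t N rN1 2))
          \<le> 4*\<delta>*R_L (ratio t N rN1 n) (ratio t N rN1 (n+1))"
        using delta_pos by (intro mult_left_mono) auto
      then show ?thesis using step_bound[OF n1 nN] by linarith
    qed
    have h2: "h\<^sup>2 \<ge> 0" by simp
    show "mod_energy \<delta> h M t N rN1 u n \<le> mod_energy \<delta> h M t N rN1 u (n-1)"
    proof (cases "n = 1")
      case True
      have r1: "ratio t N rN1 1 = 0" by (simp add: ratio_def)
      have core1: "Ec (u 1) + SS M (\<lambda>i j. D2 t N rN1 u 1 i j * (u 1 i j - u 0 i j))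
        - 1/(8*\<delta>) * SS M (\<lambda>i j. (u 1 i j - u 0 i j)\<^sup>2) \<le> Ec (u 0)"
        using core[of 1] nN True by simp
      have rho2: "ratio t N rN1 2 \<ge> 0" using rho True by (simp add: numeral_2_eq_2)
      have bnd1: "tstep t 1 < 4*\<delta>*R_L 0 (ratio t N rN1 2)" using bnd True r1 by (simp add: numeral_2_eq_2)
      have tau1: "tstep t 1 > 0" using tau_pos[of 1] nN True by simp
      have "Ec (u 1) + ratio t N rN1 2 powr (3/2) / (2*(1+ratio t N rN1 2)*tstep t 1)
           * SS M (\<lambda>i j. (u 1 i j - u 0 i j)\<^sup>2) \<le> Ec (u 0)"
        by (rule step_1[where D="D2 t N rN1 u 1" and w="\<lambda>i j. u 1 i j - u 0 i j" and \<tau>="tstep t 1"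
             and \<rho>="ratio t N rN1 2" and \<delta>=\<delta> and Ea="Ec (u 1)" and Eb="Ec (u 0)", OF core1 _ tau1 rho2 delta_pos bnd1])
           (simp add: D2_def bdf2_kernel_def field_simps)
      from mult_left_mono[OF this h2] show ?thesis using True me[of 1] me0
        by (simp add: numeral_2_eq_2)
    next
      case False
      then have n2: "2 \<le> n" using n1 by simp
      have "Ec (u n) + ratio t N rN1 (n+1) powr (3/2) / (2*(1+ratio t N rN1 (n+1))*tstep t n)
           * SS M (\<lambda>i j. (u n i j - u (n-1) i j)\<^sup>2) \<le> Ec (u (n-1))
           + ratio t N rN1 n powr (3/2) / (2*(1+ratio t N rN1 n)*tstep t (n-1))
           * SS M (\<lambda>i j. (u (n-1) i j - u (n-2) i j)\<^sup>2)"
        by (rule step_ge2[where D="D2 t N rN1 u n" and w="\<lambda>i j. u n i j - u (n-1) i j"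
             and v="\<lambda>i j. u (n-1) i j - u (n-2) i j" and r="ratio t N rN1 n" and \<tau>="tstep t n"
             and \<tau>p="tstep t (n-1)" and \<rho>="ratio t N rN1 (n+1)" and \<delta>=\<delta> and Ea="Ec (u n)" and Eb="Ec (u (n-1))",
             OF core[OF n1 nN] _ ratio_pos[of n] tau_pos[of n] tau_pos[of "n-1"] ratio_eq[OF n2 nN] rho delta_pos bnd])
           (use n2 nN in \<open>simp_all add: D2_ge2\<close>)
      note A = this
      have nn: "n - 1 + 1 = n" "n - 1 - 1 = n - 2" using n2 by simp_all
      have me1: "mod_energy \<delta> h M t N rN1 u (n-1) = h\<^sup>2 * (Ec (u (n-1))
           + ratio t N rN1 n powr (3/2) / (2*(1+ratio t N rN1 n)*tstep t (n-1))
           * SS M (\<lambda>i j. (u (n-1) i j - u (n-2) i j)\<^sup>2))"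
        by (rule me[of "n-1", unfolded nn]) (use n2 in simp)
      show ?thesis unfolding me[OF n1] me1 by (rule mult_left_mono[OF A h2])
    qed
  qed
  have part1: "\<And>n. 1 \<le> n \<Longrightarrow> n \<le> N \<Longrightarrow> energy_h \<delta> h M (u n) \<le> mod_energy \<delta> h M t N rN1 u n"
  proof -
    fix n assume n1: "1 \<le> n" and nN: "n \<le> N"
    have rho: "ratio t N rN1 (n+1) > 0" using ratio_pos[of "n+1"] n1 nN by simp
    have "0 \<le> ratio t N rN1 (n + 1) powr (3/2) / (2 * (1 + ratio t N rN1 (n + 1)) * tstep t n)
            * (norm_h h M (\<lambda>i j. u n i j - u (n - 1) i j))\<^sup>2"
      using rho tau_pos[OF n1 nN] by (intro mult_nonneg_nonneg divide_nonneg_pos) auto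
    then show "?thesis n" using n1 by (simp add: mod_energy_def)
  qed
  have part3: "\<And>n. n \<le> N \<Longrightarrow> mod_energy \<delta> h M t N rN1 u n \<le> energy_h \<delta> h M (u 0)"
  proof -
    fix n show "n \<le> N \<Longrightarrow> mod_energy \<delta> h M t N rN1 u n \<le> energy_h \<delta> h M (u 0)"
    proof (induction n)
      case 0 then show ?case by (simp add: mod_energy_def)
    next
      case (Suc m)
      then show ?case using step[of "Suc m"] by simp
    qed
  qed
  show ?thesis using part1 step part3 by auto
qed

end
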